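(* In the genomic PCR model with amplification probabilities $p_g,p_{g_d},p_h,p_{h_d}\in[0,1]$ and $p_a,p_{a_d}\in(0,1]$, started from a single genomic strand pair $(g,g_d)$, let $r=\sqrt{p_ap_{a_d}}$. Then the expected number of dye-tagged amplicons $a_d$ after $n\ge0$ cycles is $$\frac{p_gp_{h_d}}{p_ap_{a_d}}\left(\sqrt{\frac{p_a}{p_{a_d}}}\,\frac{(1+r)^n-(1-r)^n}{2}-np_a\right)+\frac{p_{g_d}p_h}{p_ap_{a_d}}\left(\frac{(1+r)^n+(1-r)^n}{2}-1\right).$$ In particular, if all six amplification probabilities equal $p\in(0,1]$, the expected number is $(1+p)^n-np-1$.
   Context: The genomic PCR model is a multi-type discrete-time branching process with six strand types $g,g_d,h,h_d,a,a_d$; all strands persist forever. In each cycle, independently, each existing strand produces one new strand with a type-specific probability (and otherwise nothing): a $g$ strand produces an $h_d$ strand with probability $p_g$; a $g_d$ strand produces an $h$ strand with probability $p_{g_d}$; an $h$ strand produces an $a_d$ strand with probability $p_h$; an $h_d$ strand produces an $a$ strand with probability $p_{h_d}$; an $a$ strand produces an $a_d$ strand with probability $p_a$; an $a_d$ strand produces an $a$ strand with probability $p_{a_d}$. The process is started from exactly one $g$ and one $g_d$ strand and no other strands. Strands of type $a_d$ are called dye-tagged amplicons. *)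

theory Defs
  imports "HOL-Probability.Probability"
begin

datatype strand = G | Gd | H | Hd | A | Ad

lemma UNIV_strand: "(UNIV :: strand set) = {G, Gd, H, Hd, A, Ad}"
  using strand.exhaust by auto

instance strand :: finite
  by standard (simp add: UNIV_strand)

fun child :: "strand \<Rightarrow> strand" where
  "child G = Hd"
| "child Gd = H"
| "child H = Ad"
| "child Hd = A"
| "child A = Ad"
| "child Ad = A"

type_synonym state = "strand \<Rightarrow> nat"

text \<open>One PCR cycle: independently, each strand of type u produces one new strand of type
  child u with probability p u.\<close>
definition pcr_step :: "(strand \<Rightarrow> real) \<Rightarrow> state \<Rightarrow> state pmf" where
  "pcr_step p s =
     map_pmf (\<lambda>X. \<lambda>t. s t + (\<Sum>u\<in>{u. child u = t}. X u))
       (Pi_pmf UNIV 0 (\<lambda>u. binomial_pmf (s u) (p u)))"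

definition pcr_init :: state where
  "pcr_init = (\<lambda>t. if t = G \<or> t = Gd then 1 else 0)"

fun pcr :: "(strand \<Rightarrow> real) \<Rightarrow> nat \<Rightarrow> state pmf" where
  "pcr p 0 = return_pmf pcr_init"
| "pcr p (Suc n) = pcr p n \<bind> pcr_step p"

definition expected_ad :: "(strand \<Rightarrow> real) \<Rightarrow> nat \<Rightarrow> real" where
  "expected_ad p n = measure_pmf.expectation (pcr p n) (\<lambda>s. real (s Ad))"

definition probs :: "real \<Rightarrow> real \<Rightarrow> real \<Rightarrow> real \<Rightarrow> real \<Rightarrow> real \<Rightarrow> strand \<Rightarrow> real" where
  "probs pg pgd ph phd pa pad t =
     (case t of G \<Rightarrow> pg | Gd \<Rightarrow> pgd | H \<Rightarrow> ph | Hd \<Rightarrow> phd | A \<Rightarrow> pa | Ad \<Rightarrow> pad)"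

end

theory Submission
  imports Defs
begin

lemma binom_mean:
  assumes p: "p \<in> {0..1}"
  shows "(\<integral>\<^sup>+k. ennreal (real k) \<partial>binomial_pmf n p) = ennreal (real n * p)"
proof (induction n)
  case 0
  then show ?case using p by (simp add: binomial_pmf_0)
next
  case (Suc n)
  have "(\<integral>\<^sup>+k. ennreal (real k) \<partial>binomial_pmf (Suc n) p)
      = (\<integral>\<^sup>+b. (\<integral>\<^sup>+k. ennreal (real ((if b then 1 else 0) + k)) \<partial>binomial_pmf n p) \<partial>bernoulli_pmf p)"
    using p by (simp add: binomial_pmf_Suc)
  also have "\<dots> = (\<integral>\<^sup>+b. ennreal ((if b then 1 else 0) + real n * p) \<partial>bernoulli_pmf p)"
  proof (intro nn_integral_cong)
    fix b :: bool
    have "(\<integral>\<^sup>+k. ennreal (real ((if b then 1 else 0) + k)) \<partial>binomial_pmf n p)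
        = (\<integral>\<^sup>+k. ennreal (if b then 1 else 0) + ennreal (real k) \<partial>binomial_pmf n p)"
      by (intro nn_integral_cong) (simp add: ennreal_plus)
    also have "\<dots> = ennreal (if b then 1 else 0) + ennreal (real n * p)"
      by (subst nn_integral_add) (auto simp: Suc measure_pmf.emeasure_space_1)
    also have "\<dots> = ennreal ((if b then 1 else 0) + real n * p)"
      using p by (subst ennreal_plus) auto
    finally show "(\<integral>\<^sup>+k. ennreal (real ((if b then 1 else 0) + k)) \<partial>binomial_pmf n p)
        = ennreal ((if b then 1 else 0) + real n * p)" .
  qed
  also have "\<dots> = ennreal (1 + real n * p) * ennreal p + ennreal (real n * p) * ennreal (1 - p)"
    using p by (subst nn_integral_bernoulli_pmf) auto
  also have "\<dots> = ennreal (real (Suc n) * p)"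
  proof -
    have "ennreal (1 + real n * p) * ennreal p + ennreal (real n * p) * ennreal (1 - p)
        = ennreal ((1 + real n * p) * p + (real n * p) * (1 - p))"
    proof -
      have e1: "ennreal ((1 + real n * p) * p) = ennreal (1 + real n * p) * ennreal p"
        using p by (intro ennreal_mult) auto
      have e2: "ennreal ((real n * p) * (1 - p)) = ennreal (real n * p) * ennreal (1 - p)"
        using p by (intro ennreal_mult) auto
      have e3: "ennreal ((1 + real n * p) * p + (real n * p) * (1 - p))
          = ennreal ((1 + real n * p) * p) + ennreal ((real n * p) * (1 - p))"
        using p by (intro ennreal_plus) auto
      show ?thesis by (simp only: e1 e2 e3)
    qed
    also have "(1 + real n * p) * p + (real n * p) * (1 - p) = real (Suc n) * p"
      by (simp add: algebra_simps)
    finally show ?thesis .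
  qed
  finally show ?case .
qed

lemma comp_mean:
  fixes p :: "strand \<Rightarrow> real" and s :: state and u :: strand
  assumes p: "\<And>u. p u \<in> {0..1}"
  shows "(\<integral>\<^sup>+X. ennreal (real (X u)) \<partial>Pi_pmf UNIV 0 (\<lambda>u. binomial_pmf (s u) (p u)))
     = ennreal (real (s u) * p u)"
proof -
  have "(\<integral>\<^sup>+X. ennreal (real (X u)) \<partial>Pi_pmf UNIV 0 (\<lambda>u. binomial_pmf (s u) (p u)))
      = (\<integral>\<^sup>+k. ennreal (real k) \<partial>map_pmf (\<lambda>f. f u) (Pi_pmf UNIV 0 (\<lambda>u. binomial_pmf (s u) (p u))))"
    by simp
  also have "map_pmf (\<lambda>f. f u) (Pi_pmf UNIV 0 (\<lambda>u. binomial_pmf (s u) (p u))) = binomial_pmf (s u) (p u)"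
    by (subst Pi_pmf_component) (auto simp: finite_class.finite_UNIV)
  finally show ?thesis using binom_mean[OF p] by simp
qed

lemma step_mean:
  assumes p: "\<And>u. p u \<in> {0..1}"
  shows "(\<integral>\<^sup>+s'. ennreal (real (s' t)) \<partial>pcr_step p s)
     = ennreal (real (s t) + (\<Sum>u\<in>{u. child u = t}. p u * real (s u)))"
proof -
  let ?P = "Pi_pmf UNIV 0 (\<lambda>u. binomial_pmf (s u) (p u))"
  let ?S = "{u. child u = t}"
  have "(\<integral>\<^sup>+s'. ennreal (real (s' t)) \<partial>pcr_step p s)
      = (\<integral>\<^sup>+X. ennreal (real (s t + (\<Sum>u\<in>?S. X u))) \<partial>?P)"
    by (simp add: pcr_step_def)
  also have "\<dots> = (\<integral>\<^sup>+X. ennreal (real (s t)) + (\<Sum>u\<in>?S. ennreal (real (X u))) \<partial>?P)"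
    by (intro nn_integral_cong) (simp add: ennreal_plus sum_nonneg)
  also have "\<dots> = ennreal (real (s t)) + (\<Sum>u\<in>?S. (\<integral>\<^sup>+X. ennreal (real (X u)) \<partial>?P))"
    by (simp add: nn_integral_add nn_integral_sum measure_pmf.emeasure_space_1 del: sum_ennreal)
  also have "\<dots> = ennreal (real (s t)) + (\<Sum>u\<in>?S. ennreal (p u * real (s u)))"
    using comp_mean[OF p] by (simp add: mult.commute)
  also have "\<dots> = ennreal (real (s t) + (\<Sum>u\<in>?S. p u * real (s u)))"
    using p by (simp add: sum_ennreal sum_nonneg ennreal_plus)
  finally show ?thesis .
qed


definition FAd :: "real \<Rightarrow> real \<Rightarrow> real \<Rightarrow> real \<Rightarrow> nat \<Rightarrow> real" where
 "FAd r q x y n = x / r^2 * (q * (((1+r)^n - (1-r)^n)/2) - real n * (r*q))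
                + y / r^2 * (((1+r)^n + (1-r)^n)/2 - 1)"
definition FA :: "real \<Rightarrow> real \<Rightarrow> real \<Rightarrow> real \<Rightarrow> nat \<Rightarrow> real" where
 "FA r q x y n = x / r^2 * (((1+r)^n + (1-r)^n)/2 - 1)
                + y / r^2 * (((1+r)^n - (1-r)^n)/(2*q) - real n * (r/q))"
lemma FAd_Suc: assumes "r > 0" "q > 0"
  shows "FAd r q x y (Suc n) = FAd r q x y n + real n * y + r*q * FA r q x y n"
  using assms unfolding FAd_def FA_def
  by (simp add: field_simps power2_eq_square)
lemma FA_Suc: assumes "r > 0" "q > 0"
  shows "FA r q x y (Suc n) = FA r q x y n + real n * x + r/q * FAd r q x y n"
  using assms unfolding FAd_def FA_def
  by (simp add: field_simps power2_eq_square)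
lemma FA0: "FA r q x y 0 = 0" "FAd r q x y 0 = 0" by (simp_all add: FA_def FAd_def)

fun mv :: "(strand \<Rightarrow> real) \<Rightarrow> nat \<Rightarrow> strand \<Rightarrow> real" where
  "mv p 0 t = real (pcr_init t)"
| "mv p (Suc n) t = mv p n t + (\<Sum>u\<in>{u. child u = t}. p u * mv p n u)"

lemma mv_nonneg:
  assumes p: "\<And>u. p u \<in> {0..1}"
  shows "mv p n t \<ge> 0"
proof (induction n arbitrary: t)
  case 0 then show ?case by simp
next
  case (Suc n)
  have "(\<Sum>u\<in>{u. child u = t}. p u * mv p n u) \<ge> 0"
    using p Suc by (intro sum_nonneg mult_nonneg_nonneg) auto
  then show ?case using Suc by simp
qed

lemma mean_pcr:
  assumes p: "\<And>u. p u \<in> {0..1}"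
  shows "(\<integral>\<^sup>+s. ennreal (real (s t)) \<partial>pcr p n) = ennreal (mv p n t)"
proof (induction n arbitrary: t)
  case 0 then show ?case by simp
next
  case (Suc n)
  let ?S = "{u. child u = t}"
  have "(\<integral>\<^sup>+s. ennreal (real (s t)) \<partial>pcr p (Suc n))
     = (\<integral>\<^sup>+s. ennreal (real (s t) + (\<Sum>u\<in>?S. p u * real (s u))) \<partial>pcr p n)"
    using step_mean[OF p] by simp
  also have "\<dots> = (\<integral>\<^sup>+s. ennreal (real (s t)) + (\<Sum>u\<in>?S. ennreal (p u) * ennreal (real (s u))) \<partial>pcr p n)"
    using p by (intro nn_integral_cong)
      (simp add: ennreal_plus sum_nonneg ennreal_mult sum_ennreal[symmetric] del: sum_ennreal)
  also have "\<dots> = (\<integral>\<^sup>+s. ennreal (real (s t)) \<partial>pcr p n) + (\<Sum>u\<in>?S. ennreal (p u) * (\<integral>\<^sup>+s. ennreal (real (s u)) \<partial>pcr p n))"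
    by (simp add: nn_integral_add nn_integral_sum nn_integral_cmult del: sum_ennreal)
  also have "\<dots> = ennreal (mv p n t) + (\<Sum>u\<in>?S. ennreal (p u) * ennreal (mv p n u))"
    by (simp add: Suc del: sum_ennreal)
  also have "\<dots> = ennreal (mv p (Suc n) t)"
    using p mv_nonneg[OF p]
    by (simp add: ennreal_plus sum_nonneg ennreal_mult sum_ennreal[symmetric] del: sum_ennreal)
  finally show ?case .
qed

lemma expected_mv:
  assumes p: "\<And>u. p u \<in> {0..1}"
  shows "expected_ad p n = mv p n Ad"
proof -
  have "integrable (pcr p n) (\<lambda>s. real (s Ad)) \<and> measure_pmf.expectation (pcr p n) (\<lambda>s. real (s Ad)) = mv p n Ad"
    by (rule nn_integral_eq_integrable[THEN iffD1]) (auto simp: mean_pcr[OF p] mv_nonneg[OF p])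
  then show ?thesis by (simp add: expected_ad_def)
qed

lemma pre0: "{u. child u = G} = {}"
  by (rule set_eqI) (case_tac x; simp)
lemma pre1: "{u. child u = Gd} = {}"
  by (rule set_eqI) (case_tac x; simp)
lemma pre2: "{u. child u = H} = {Gd}"
  by (rule set_eqI) (case_tac x; simp)
lemma pre3: "{u. child u = Hd} = {G}"
  by (rule set_eqI) (case_tac x; simp)
lemma pre4: "{u. child u = A} = {Hd, Ad}"
  by (rule set_eqI) (case_tac x; simp)
lemma pre5: "{u. child u = Ad} = {H, A}"
  by (rule set_eqI) (case_tac x; simp)
lemmas pre = pre0 pre1 pre2 pre3 pre4 pre5

lemma probs_range:
  assumes "pg \<in> {0..1}" "pgd \<in> {0..1}" "ph \<in> {0..1}" "phd \<in> {0..1}" "pa \<in> {0..1}" "pad \<in> {0..1}"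
  shows "probs pg pgd ph phd pa pad u \<in> {0..1}"
  using assms by (cases u) (simp_all add: probs_def)

lemma closed:
  assumes r: "r > 0" and q: "q > 0" and a: "pa = r * q" and b: "pad = r / q"
  shows "mv (probs pg pgd ph phd pa pad) n G = 1 \<and> mv (probs pg pgd ph phd pa pad) n Gd = 1
    \<and> mv (probs pg pgd ph phd pa pad) n H = real n * pgd \<and> mv (probs pg pgd ph phd pa pad) n Hd = real n * pg
    \<and> mv (probs pg pgd ph phd pa pad) n A = FA r q (pg*phd) (pgd*ph) n
    \<and> mv (probs pg pgd ph phd pa pad) n Ad = FAd r q (pg*phd) (pgd*ph) n"
proof (induction n)
  case 0 then show ?case by (simp add: FA0 pcr_init_def)
next
  case (Suc n)
  then show ?case using r q
    by (simp add: pre probs_def a b FA_Suc FAd_Suc algebra_simps)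
qed

lemma general:
  assumes "pg \<in> {0..1}" "pgd \<in> {0..1}" "ph \<in> {0..1}" "phd \<in> {0..1}"
    and pa: "pa \<in> {0<..1}" and pad: "pad \<in> {0<..1}"
  shows "expected_ad (probs pg pgd ph phd pa pad) n =
           pg * phd / (pa * pad) *
             (sqrt (pa / pad) * (((1 + sqrt (pa * pad)) ^ n - (1 - sqrt (pa * pad)) ^ n) / 2) - real n * pa)
         + pgd * ph / (pa * pad) * (((1 + sqrt (pa * pad)) ^ n + (1 - sqrt (pa * pad)) ^ n) / 2 - 1)"
proof -
  define r where "r = sqrt (pa * pad)"
  define q where "q = sqrt (pa / pad)"
  have r0: "r > 0" and q0: "q > 0" using pa pad by (auto simp: r_def q_def)
  have rq: "r * q = pa" using pa pad
    by (simp add: r_def q_def real_sqrt_mult[symmetric])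
  have rq2: "r / q = pad" using pa pad
    by (simp add: r_def q_def real_sqrt_divide[symmetric] real_sqrt_mult[symmetric])
  have r2: "r^2 = pa * pad" using pa pad by (simp add: r_def)
  have "expected_ad (probs pg pgd ph phd pa pad) n = mv (probs pg pgd ph phd pa pad) n Ad"
    by (rule expected_mv, rule probs_range) (use assms in auto)
  also have "\<dots> = FAd r q (pg*phd) (pgd*ph) n"
    using closed[OF r0 q0 rq[symmetric] rq2[symmetric]] by blast
  also have "\<dots> = pg * phd / (pa * pad) *
             (q * (((1 + r) ^ n - (1 - r) ^ n) / 2) - real n * pa)
         + pgd * ph / (pa * pad) * (((1 + r) ^ n + (1 - r) ^ n) / 2 - 1)"
    unfolding FAd_def r2 rq by simp
  finally show ?thesis by (simp add: r_def q_def)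
qed

theorem mainTheorem5:
  fixes pg pgd ph phd pa pad :: real and n :: nat
  assumes "pg \<in> {0..1}" "pgd \<in> {0..1}" "ph \<in> {0..1}" "phd \<in> {0..1}"
    and "pa \<in> {0<..1}" "pad \<in> {0<..1}"
  defines "r \<equiv> sqrt (pa * pad)"
  shows "(expected_ad (probs pg pgd ph phd pa pad) n =
           pg * phd / (pa * pad) *
             (sqrt (pa / pad) * (((1 + r) ^ n - (1 - r) ^ n) / 2) - real n * pa)
         + pgd * ph / (pa * pad) * (((1 + r) ^ n + (1 - r) ^ n) / 2 - 1))
         \<and> (\<forall>p \<in> {0<..1::real}. expected_ad (probs p p p p p p) n = (1 + p) ^ n - real n * p - 1)"
proof
  show "expected_ad (probs pg pgd ph phd pa pad) n =
           pg * phd / (pa * pad) *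
             (sqrt (pa / pad) * (((1 + r) ^ n - (1 - r) ^ n) / 2) - real n * pa)
         + pgd * ph / (pa * pad) * (((1 + r) ^ n + (1 - r) ^ n) / 2 - 1)"
    unfolding r_def by (rule general) (use assms in auto)
  show "\<forall>p \<in> {0<..1::real}. expected_ad (probs p p p p p p) n = (1 + p) ^ n - real n * p - 1"
  proof
    fix p :: real assume p: "p \<in> {0<..1}"
    have "expected_ad (probs p p p p p p) n =
           p * p / (p * p) *
             (sqrt (p / p) * (((1 + sqrt (p * p)) ^ n - (1 - sqrt (p * p)) ^ n) / 2) - real n * p)
         + p * p / (p * p) * (((1 + sqrt (p * p)) ^ n + (1 - sqrt (p * p)) ^ n) / 2 - 1)"
      by (rule general) (use p in auto)
    also have "\<dots> = (1 + p) ^ n - real n * p - 1"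
      using p by (simp add: field_simps)
    finally show "expected_ad (probs p p p p p p) n = (1 + p) ^ n - real n * p - 1" .
  qed
qed

end
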